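(* Let $\mathfrak A$ and $\mathcal A$ be Banach algebras with $\mathcal A$ a commutative Banach $\mathfrak A$-bimodule with compatible actions, and let $X,Y$ be commutative Banach $\mathcal A$-$\mathfrak A$-modules, regarded as left Banach $\mathcal A\widehat\otimes_{\mathfrak A}\mathcal A^{op}$-modules via $(a\otimes b)\cdot x=a\cdot x\cdot b$. (i) If $\phi:X\to Y$ is a bounded $\mathcal A$-$\mathfrak A$-module homomorphism, then $\phi$ is a left $\mathcal A\widehat\otimes_{\mathfrak A}\mathcal A^{op}$-$\mathfrak A$-module homomorphism. (ii) If $Y$ is an essential $\mathcal A$-bimodule and $\varphi:X^*\to Y^*$ is a bounded right $\mathcal A\widehat\otimes_{\mathfrak A}\mathcal A^{op}$-$\mathfrak A$-module homomorphism, then $\varphi$ is an $\mathcal A$-$\mathfrak A$-module homomorphism.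
   Context: Compatible actions: $\alpha\cdot(ab)=(\alpha\cdot a)b$, $(ab)\cdot\alpha=a(b\cdot\alpha)$; commutative means $\alpha\cdot a=a\cdot\alpha$. A Banach $\mathcal A$-$\mathfrak A$-module is a Banach space $X$ which is a Banach $\mathcal A$-bimodule and $\mathfrak A$-bimodule with $\alpha\cdot(a\cdot x)=(\alpha\cdot a)\cdot x$, $a\cdot(\alpha\cdot x)=(a\cdot\alpha)\cdot x$, $a\cdot(x\cdot\alpha)=(a\cdot x)\cdot\alpha$ and analogous right identities; commutative if $\alpha\cdot x=x\cdot\alpha$; $X^*$ has the dual actions. $\mathcal A^{op}$ is $\mathcal A$ with reversed product; $\mathcal A\widehat\otimes_{\mathfrak A}\mathcal A^{op}=(\mathcal A\widehat\otimes\mathcal A)/I$, $I$ the closed span of $a\cdot\alpha\otimes b-a\otimes\alpha\cdot b$, is a Banach algebra with $(a\otimes b)(c\otimes d)=ac\otimes db$ and an $\mathfrak A$-bimodule via $\alpha\cdot(a\otimes b)=(\alpha\cdot a)\otimes b$, $(a\otimes b)\cdot\alpha=a\otimes(b\cdot\alpha)$; the action $(a\otimes b)\cdot x=a\cdot x\cdot b$ is well defined on it. $X^*$ is a right $\mathcal A\widehat\otimes_{\mathfrak A}\mathcal A^{op}$-module via $\langle x,f\cdot m\rangle=\langle m\cdot x,f\rangle$. An $\mathcal A$-$\mathfrak A$-module homomorphism is a map that is both an $\mathcal A$-bimodule and an $\mathfrak A$-bimodule homomorphism; a left (right) $\mathcal A\widehat\otimes_{\mathfrak A}\mathcal A^{op}$-$\mathfrak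 A$-module homomorphism is one that is a left (right) $\mathcal A\widehat\otimes_{\mathfrak A}\mathcal A^{op}$-module homomorphism and an $\mathfrak A$-bimodule homomorphism. $Y$ is an essential $\mathcal A$-bimodule if $\mathrm{span}\{a\cdot y\cdot b\}$ is dense in $Y$. *)

theory Defs
  imports "HOL-Analysis.Analysis"
begin

definition banach_bimodule ::
  "('r::real_normed_algebra \<Rightarrow> 'm::banach \<Rightarrow> 'm) \<Rightarrow> ('m \<Rightarrow> 'r \<Rightarrow> 'm) \<Rightarrow> bool" where
  "banach_bimodule l r \<longleftrightarrow>
     bounded_bilinear l \<and> bounded_bilinear r \<and>
     (\<forall>a b x. l (a * b) x = l a (l b x)) \<and>
     (\<forall>a b x. r x (a * b) = r (r x a) b) \<and>
     (\<forall>a b x. l a (r x b) = r (l a x) b)"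

text \<open>The Banach algebra A (type 'b) is a commutative Banach bimodule over the
  Banach algebra frakA (type 'u) with compatible actions ul, ur.\<close>
definition comm_compat_alg_module ::
  "('u::{real_normed_algebra,banach} \<Rightarrow> 'b::{real_normed_algebra,banach} \<Rightarrow> 'b) \<Rightarrow> ('b \<Rightarrow> 'u \<Rightarrow> 'b) \<Rightarrow> bool" where
  "comm_compat_alg_module ul ur \<longleftrightarrow>
     banach_bimodule ul ur \<and>
     (\<forall>\<alpha> a b. ul \<alpha> (a * b) = ul \<alpha> a * b) \<and>
     (\<forall>\<alpha> a b. ur (a * b) \<alpha> = a * ur b \<alpha>) \<and>
     (\<forall>\<alpha> a. ul \<alpha> a = ur a \<alpha>)"

definition comm_AU_module ::
  "('u::{real_normed_algebra,banach} \<Rightarrow> 'b::{real_normed_algebra,banach} \<Rightarrow> 'b) \<Rightarrow> ('b \<Rightarrow> 'u \<Rightarrow> 'b) \<Rightarrow>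
   ('b \<Rightarrow> 'x::banach \<Rightarrow> 'x) \<Rightarrow> ('x \<Rightarrow> 'b \<Rightarrow> 'x) \<Rightarrow>
   ('u \<Rightarrow> 'x \<Rightarrow> 'x) \<Rightarrow> ('x \<Rightarrow> 'u \<Rightarrow> 'x) \<Rightarrow> bool" where
  "comm_AU_module ul ur al ar fl fr \<longleftrightarrow>
     banach_bimodule al ar \<and> banach_bimodule fl fr \<and>
     (\<forall>\<alpha> a x. fl \<alpha> (al a x) = al (ul \<alpha> a) x) \<and>
     (\<forall>\<alpha> a x. al a (fl \<alpha> x) = al (ur a \<alpha>) x) \<and>
     (\<forall>\<alpha> a x. al a (fr x \<alpha>) = fr (al a x) \<alpha>) \<and>
     (\<forall>\<alpha> a x. ar (fl \<alpha> x) a = fl \<alpha> (ar x a)) \<and>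
     (\<forall>\<alpha> a x. ar (fr x \<alpha>) a = ar x (ul \<alpha> a)) \<and>
     (\<forall>\<alpha> a x. fr (ar x a) \<alpha> = ar x (ur a \<alpha>)) \<and>
     (\<forall>\<alpha> x. fl \<alpha> x = fr x \<alpha>)"

definition essential_bimodule ::
  "('b \<Rightarrow> 'y::real_normed_vector \<Rightarrow> 'y) \<Rightarrow> ('y \<Rightarrow> 'b \<Rightarrow> 'y) \<Rightarrow> bool" where
  "essential_bimodule al ar \<longleftrightarrow> closure (span {al a (ar y b) | a b y. True}) = UNIV"

definition dual_left :: "('x::real_normed_vector \<Rightarrow> 'r \<Rightarrow> 'x) \<Rightarrow> 'r \<Rightarrow> ('x \<Rightarrow>\<^sub>L real) \<Rightarrow> ('x \<Rightarrow>\<^sub>L real)" where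
  "dual_left r a f = Blinfun (\<lambda>x. blinfun_apply f (r x a))"

definition dual_right :: "('r \<Rightarrow> 'x::real_normed_vector \<Rightarrow> 'x) \<Rightarrow> ('x \<Rightarrow>\<^sub>L real) \<Rightarrow> 'r \<Rightarrow> ('x \<Rightarrow>\<^sub>L real)" where
  "dual_right l f a = Blinfun (\<lambda>x. blinfun_apply f (l a x))"

text \<open>Every element of the projective tensor product is the (image of a) sum
  \<Sum> a_n \<otimes> b_n with \<Sum> ||a_n|| ||b_n|| < \<infinity>; elements of the module
  tensor product are classes of such elements. We quantify over these representatives.\<close>
definition ptensor_reps :: "(nat \<Rightarrow> 'b::real_normed_vector \<times> 'b) set" where
  "ptensor_reps = {p. summable (\<lambda>n. norm (fst (p n)) * norm (snd (p n)))}"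

definition tens_act :: "('b \<Rightarrow> 'x::real_normed_vector \<Rightarrow> 'x) \<Rightarrow> ('x \<Rightarrow> 'b \<Rightarrow> 'x) \<Rightarrow> (nat \<Rightarrow> 'b \<times> 'b) \<Rightarrow> 'x \<Rightarrow> 'x" where
  "tens_act al ar p x = (\<Sum>n. al (fst (p n)) (ar x (snd (p n))))"

definition dual_tens_act :: "('b \<Rightarrow> 'x::real_normed_vector \<Rightarrow> 'x) \<Rightarrow> ('x \<Rightarrow> 'b \<Rightarrow> 'x) \<Rightarrow> ('x \<Rightarrow>\<^sub>L real) \<Rightarrow> (nat \<Rightarrow> 'b \<times> 'b) \<Rightarrow> ('x \<Rightarrow>\<^sub>L real)" where
  "dual_tens_act al ar f p = Blinfun (\<lambda>x. blinfun_apply f (tens_act al ar p x))"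

definition bimodule_hom :: "('r \<Rightarrow> 'x \<Rightarrow> 'x) \<Rightarrow> ('x \<Rightarrow> 'r \<Rightarrow> 'x) \<Rightarrow> ('r \<Rightarrow> 'y \<Rightarrow> 'y) \<Rightarrow> ('y \<Rightarrow> 'r \<Rightarrow> 'y) \<Rightarrow> ('x \<Rightarrow> 'y) \<Rightarrow> bool" where
  "bimodule_hom lx rx ly ry \<phi> \<longleftrightarrow> (\<forall>a x. \<phi> (lx a x) = ly a (\<phi> x)) \<and> (\<forall>a x. \<phi> (rx x a) = ry (\<phi> x) a)"

end

theory Submission
  imports Defs
begin

lemma agree_closure_span:
  fixes g h :: "'y::real_normed_vector \<Rightarrow> real"
  assumes "bounded_linear g" "bounded_linear h" "\<And>s. s \<in> S \<Longrightarrow> g s = h s"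
    "closure (span S) = UNIV"
  shows "g y = h y"
proof -
  let ?T = "{y. g y = h y}"
  interpret g: bounded_linear g by fact
  interpret h: bounded_linear h by fact
  have sub: "subspace ?T"
    by (auto simp: subspace_def g.zero h.zero g.add h.add g.scaleR h.scaleR)
  have cl: "closed ?T"
    by (intro closed_Collect_eq continuous_on_id g.continuous_on h.continuous_on)
  have "span S \<subseteq> ?T" using sub assms(3) by (intro span_minimal) auto
  then have "closure (span S) \<subseteq> ?T" using cl by (rule closure_minimal)
  then show ?thesis using assms(4) by auto
qed

definition single_rep :: "'b::real_normed_vector \<Rightarrow> 'b \<Rightarrow> nat \<Rightarrow> 'b \<times> 'b" where
  "single_rep c d = (\<lambda>n. if n = 0 then (c, d) else (0, 0))"

lemma single_rep_in: "single_rep c d \<in> ptensor_reps"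
proof -
  have "(\<lambda>n. norm (fst (single_rep c d n)) * norm (snd (single_rep c d n)))
      = (\<lambda>n. if n = 0 then norm c * norm d else 0)"
    by (auto simp: single_rep_def)
  then show ?thesis by (simp add: ptensor_reps_def)
qed

lemma tens_act_single:
  assumes "bounded_bilinear al"
  shows "tens_act al ar (single_rep c d) x = al c (ar x d)"
proof -
  interpret bounded_bilinear al by fact
  have "(\<lambda>n. al (fst (single_rep c d n)) (ar x (snd (single_rep c d n))))
      = (\<lambda>n. if n = 0 then al c (ar x d) else 0)"
    by (auto simp: single_rep_def zero_left)
  then show ?thesis unfolding tens_act_def using sums_single[of 0 "\<lambda>_. al c (ar x d)"]
    by (simp add: sums_iff)
qed

lemma bl_lr:
  assumes "bounded_bilinear al" "bounded_bilinear ar"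
  shows "bounded_linear (\<lambda>x. al c (ar x d))"
  using bounded_linear_compose[OF bounded_bilinear.bounded_linear_right[OF assms(1)]
      bounded_bilinear.bounded_linear_left[OF assms(2)]] by (simp add: o_def)

lemma dual_tens_single:
  assumes "bounded_bilinear al" "bounded_bilinear ar"
  shows "blinfun_apply (dual_tens_act al ar f (single_rep c d)) x = blinfun_apply f (al c (ar x d))"
proof -
  have "bounded_linear (\<lambda>x. blinfun_apply f (al c (ar x d)))"
    using bounded_linear_compose[OF blinfun.bounded_linear_right[of f] bl_lr[OF assms]] by (simp add: o_def)
  then show ?thesis unfolding dual_tens_act_def tens_act_single[OF assms(1)]
    by (simp add: bounded_linear_Blinfun_apply)
qed

lemma dual_left_apply:
  assumes "bounded_bilinear r"
  shows "blinfun_apply (dual_left r a f) x = blinfun_apply f (r x a)"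
proof -
  have "bounded_linear (\<lambda>x. blinfun_apply f (r x a))"
    using bounded_linear_compose[OF blinfun.bounded_linear_right[of f] bounded_bilinear.bounded_linear_left[OF assms]]
    by (simp add: o_def)
  then show ?thesis unfolding dual_left_def by (simp add: bounded_linear_Blinfun_apply)
qed

lemma dual_right_apply:
  assumes "bounded_bilinear l"
  shows "blinfun_apply (dual_right l f a) x = blinfun_apply f (l a x)"
proof -
  have "bounded_linear (\<lambda>x. blinfun_apply f (l a x))"
    using bounded_linear_compose[OF blinfun.bounded_linear_right[of f] bounded_bilinear.bounded_linear_right[OF assms]]
    by (simp add: o_def)
  then show ?thesis unfolding dual_right_def by (simp add: bounded_linear_Blinfun_apply)
qed

lemma tens_summable:
  fixes al :: "'b::real_normed_vector \<Rightarrow> 'x::banach \<Rightarrow> 'x"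
  assumes "bounded_bilinear al" "bounded_bilinear ar" "p \<in> ptensor_reps"
  shows "summable (\<lambda>n. al (fst (p n)) (ar x (snd (p n))))"
proof -
  obtain K1 where K1: "\<And>a b. norm (al a b) \<le> norm a * norm b * K1" and K1p: "K1 > 0"
    using bounded_bilinear.pos_bounded[OF assms(1)] by blast
  obtain K2 where K2: "\<And>a b. norm (ar a b) \<le> norm a * norm b * K2"
    using bounded_bilinear.bounded[OF assms(2)] by blast
  have K1n: "K1 \<ge> 0" using K1p by simp
  have s: "summable (\<lambda>n. norm (fst (p n)) * norm (snd (p n)))"
    using assms(3) by (simp add: ptensor_reps_def)
  have ev: "\<forall>\<^sub>F n in sequentially. norm (al (fst (p n)) (ar x (snd (p n))))
        \<le> norm (fst (p n)) * norm (snd (p n)) * (K1 * norm x * K2)"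
  proof (intro always_eventually allI)
      fix n
      have "norm (al (fst (p n)) (ar x (snd (p n)))) \<le> norm (fst (p n)) * norm (ar x (snd (p n))) * K1"
        by (rule K1)
      also have "\<dots> \<le> norm (fst (p n)) * (norm x * norm (snd (p n)) * K2) * K1"
        by (intro mult_right_mono mult_left_mono K2 K1n norm_ge_zero)
      finally show "norm (al (fst (p n)) (ar x (snd (p n))))
        \<le> norm (fst (p n)) * norm (snd (p n)) * (K1 * norm x * K2)" by (simp add: algebra_simps)
  qed
  show ?thesis by (rule summable_comparison_test_ev[OF ev summable_mult2[OF s]])
qed

theorem proposition4p1:
  fixes ul :: "'u::{real_normed_algebra,banach} \<Rightarrow> 'b::{real_normed_algebra,banach} \<Rightarrow> 'b"
    and ur :: "'b \<Rightarrow> 'u \<Rightarrow> 'b"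
    and axl :: "'b \<Rightarrow> 'x::banach \<Rightarrow> 'x" and axr :: "'x \<Rightarrow> 'b \<Rightarrow> 'x"
    and uxl :: "'u \<Rightarrow> 'x \<Rightarrow> 'x" and uxr :: "'x \<Rightarrow> 'u \<Rightarrow> 'x"
    and ayl :: "'b \<Rightarrow> 'y::banach \<Rightarrow> 'y" and ayr :: "'y \<Rightarrow> 'b \<Rightarrow> 'y"
    and uyl :: "'u \<Rightarrow> 'y \<Rightarrow> 'y" and uyr :: "'y \<Rightarrow> 'u \<Rightarrow> 'y"
  assumes A: "comm_compat_alg_module ul ur"
    and X: "comm_AU_module ul ur axl axr uxl uxr"
    and Y: "comm_AU_module ul ur ayl ayr uyl uyr"
  shows
    "(\<forall>\<phi> :: 'x \<Rightarrow> 'y.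
        bounded_linear \<phi> \<and> bimodule_hom axl axr ayl ayr \<phi> \<and> bimodule_hom uxl uxr uyl uyr \<phi>
        \<longrightarrow> (\<forall>p \<in> ptensor_reps. \<forall>x. \<phi> (tens_act axl axr p x) = tens_act ayl ayr p (\<phi> x))
            \<and> bimodule_hom uxl uxr uyl uyr \<phi>)
     \<and>
     (\<forall>\<psi> :: ('x \<Rightarrow>\<^sub>L real) \<Rightarrow> ('y \<Rightarrow>\<^sub>L real).
        essential_bimodule ayl ayr \<and> bounded_linear \<psi>
        \<and> (\<forall>p \<in> ptensor_reps. \<forall>f. \<psi> (dual_tens_act axl axr f p) = dual_tens_act ayl ayr (\<psi> f) p)
        \<and> bimodule_hom (dual_left uxr) (dual_right uxl) (dual_left uyr) (dual_right uyl) \<psi>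
        \<longrightarrow> bimodule_hom (dual_left axr) (dual_right axl) (dual_left ayr) (dual_right ayl) \<psi>
            \<and> bimodule_hom (dual_left uxr) (dual_right uxl) (dual_left uyr) (dual_right uyl) \<psi>)"
  proof (intro conjI allI impI)
  have Abb: "bounded_bilinear ul" "bounded_bilinear ur"
    using A by (auto simp: comm_compat_alg_module_def banach_bimodule_def)
  have Xbb: "bounded_bilinear axl" "bounded_bilinear axr" "bounded_bilinear uxl" "bounded_bilinear uxr"
    and Xas: "\<And>a b x. axl (a * b) x = axl a (axl b x)" "\<And>a b x. axr x (a * b) = axr (axr x a) b"
      "\<And>a b x. axl a (axr x b) = axr (axl a x) b"
    using X by (auto simp: comm_AU_module_def banach_bimodule_def)
  have Ybb: "bounded_bilinear ayl" "bounded_bilinear ayr" "bounded_bilinear uyl" "bounded_bilinear uyr"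
    and Yas: "\<And>a b x. ayl (a * b) x = ayl a (ayl b x)" "\<And>a b x. ayr x (a * b) = ayr (ayr x a) b"
      "\<And>a b x. ayl a (ayr x b) = ayr (ayl a x) b"
    using Y by (auto simp: comm_AU_module_def banach_bimodule_def)
  {
    fix \<phi> :: "'x \<Rightarrow> 'y"
    assume H: "bounded_linear \<phi> \<and> bimodule_hom axl axr ayl ayr \<phi> \<and> bimodule_hom uxl uxr uyl uyr \<phi>"
    then have bl: "bounded_linear \<phi>" and hl: "\<And>a x. \<phi> (axl a x) = ayl a (\<phi> x)"
      and hr: "\<And>a x. \<phi> (axr x a) = ayr (\<phi> x) a"
      by (auto simp: bimodule_hom_def)
    show "\<forall>p \<in> ptensor_reps. \<forall>x. \<phi> (tens_act axl axr p x) = tens_act ayl ayr p (\<phi> x)"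
    proof (intro ballI allI)
      fix p :: "nat \<Rightarrow> 'b \<times> 'b" and x assume p: "p \<in> ptensor_reps"
      have "\<phi> (tens_act axl axr p x) = (\<Sum>n. \<phi> (axl (fst (p n)) (axr x (snd (p n)))))"
        unfolding tens_act_def
        by (rule bounded_linear.suminf[OF bl tens_summable[OF Xbb(1,2) p]])
      also have "\<dots> = tens_act ayl ayr p (\<phi> x)"
        unfolding tens_act_def by (simp add: hl hr)
      finally show "\<phi> (tens_act axl axr p x) = tens_act ayl ayr p (\<phi> x)" .
    qed
    show "bimodule_hom uxl uxr uyl uyr \<phi>" using H by simp
  }
  {
    fix \<psi> :: "('x \<Rightarrow>\<^sub>L real) \<Rightarrow> ('y \<Rightarrow>\<^sub>L real)"
    assume H: "essential_bimodule ayl ayr \<and> bounded_linear \<psi>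
        \<and> (\<forall>p \<in> ptensor_reps. \<forall>f. \<psi> (dual_tens_act axl axr f p) = dual_tens_act ayl ayr (\<psi> f) p)
        \<and> bimodule_hom (dual_left uxr) (dual_right uxl) (dual_left uyr) (dual_right uyl) \<psi>"
    then have ess: "closure (span {ayl a (ayr y b) | a b y. True}) = UNIV"
      and T: "\<And>(p::nat \<Rightarrow> 'b \<times> 'b) f. p \<in> ptensor_reps \<Longrightarrow> \<psi> (dual_tens_act axl axr f p) = dual_tens_act ayl ayr (\<psi> f) p"
      by (auto simp: essential_bimodule_def)
    have T1: "blinfun_apply (\<psi> f) (ayl c (ayr y d)) = blinfun_apply (\<psi> (dual_tens_act axl axr f (single_rep c d))) y"
      for f c d y
      using T[OF single_rep_in, of f c d] dual_tens_single[OF Ybb(1,2), of "\<psi> f" c d y] by simp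
    have bld: "bounded_linear (blinfun_apply g)" for g :: "'y \<Rightarrow>\<^sub>L real"
      by (rule blinfun.bounded_linear_right)
    show "bimodule_hom (dual_left axr) (dual_right axl) (dual_left ayr) (dual_right ayl) \<psi>"
      unfolding bimodule_hom_def
    proof (intro conjI allI)
      fix a f
      show "\<psi> (dual_left axr a f) = dual_left ayr a (\<psi> f)"
      proof (rule blinfun_eqI)
        fix y
        have blr: "bounded_linear (\<lambda>y. blinfun_apply (\<psi> f) (ayr y a))"
          using bounded_linear_compose[OF bld[of "\<psi> f"] bounded_bilinear.bounded_linear_left[OF Ybb(2)]]
          by (simp add: o_def)
        have "blinfun_apply (\<psi> (dual_left axr a f)) y = blinfun_apply (\<psi> f) (ayr y a)"
        proof (rule agree_closure_span[OF bld blr _ ess])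
          fix s assume "s \<in> {ayl c (ayr y' d) | c d y'. True}"
          then obtain c d y' where s: "s = ayl c (ayr y' d)" by blast
          have e: "dual_tens_act axl axr (dual_left axr a f) (single_rep c d)
              = dual_tens_act axl axr f (single_rep c (d * a))"
            by (rule blinfun_eqI) (simp add: dual_tens_single[OF Xbb(1,2)] dual_left_apply[OF Xbb(2)] Xas)
          have "blinfun_apply (\<psi> f) (ayr s a) = blinfun_apply (\<psi> f) (ayl c (ayr y' (d * a)))"
            by (simp add: s Yas)
          also have "\<dots> = blinfun_apply (\<psi> (dual_left axr a f)) s"
            by (simp add: T1 s e)
          finally show "blinfun_apply (\<psi> (dual_left axr a f)) s = blinfun_apply (\<psi> f) (ayr s a)" by simp
        qed
        then show "blinfun_apply (\<psi> (dual_left axr a f)) y = blinfun_apply (dual_left ayr a (\<psi> f)) y"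
          by (simp add: dual_left_apply[OF Ybb(2)])
      qed
    next
      fix f a
      show "\<psi> (dual_right axl f a) = dual_right ayl (\<psi> f) a"
      proof (rule blinfun_eqI)
        fix y
        have blr: "bounded_linear (\<lambda>y. blinfun_apply (\<psi> f) (ayl a y))"
          using bounded_linear_compose[OF bld[of "\<psi> f"] bounded_bilinear.bounded_linear_right[OF Ybb(1)]]
          by (simp add: o_def)
        have "blinfun_apply (\<psi> (dual_right axl f a)) y = blinfun_apply (\<psi> f) (ayl a y)"
        proof (rule agree_closure_span[OF bld blr _ ess])
          fix s assume "s \<in> {ayl c (ayr y' d) | c d y'. True}"
          then obtain c d y' where s: "s = ayl c (ayr y' d)" by blast
          have e: "dual_tens_act axl axr (dual_right axl f a) (single_rep c d)
              = dual_tens_act axl axr f (single_rep (a * c) d)"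
            by (rule blinfun_eqI) (simp add: dual_tens_single[OF Xbb(1,2)] dual_right_apply[OF Xbb(1)] Xas)
          have "blinfun_apply (\<psi> f) (ayl a s) = blinfun_apply (\<psi> f) (ayl (a * c) (ayr y' d))"
            by (simp add: s Yas)
          also have "\<dots> = blinfun_apply (\<psi> (dual_right axl f a)) s"
            by (simp add: T1 s e)
          finally show "blinfun_apply (\<psi> (dual_right axl f a)) s = blinfun_apply (\<psi> f) (ayl a s)" by simp
        qed
        then show "blinfun_apply (\<psi> (dual_right axl f a)) y = blinfun_apply (dual_right ayl (\<psi> f) a) y"
          by (simp add: dual_right_apply[OF Ybb(1)])
      qed
    qed
    show "bimodule_hom (dual_left uxr) (dual_right uxl) (dual_left uyr) (dual_right uyl) \<psi>"
      using H by simp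
  }
qed

end
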